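(* Let $S$ be a semigroup and $T$ a finitely generated weakly pseudo-right-unitary subsemigroup of $S$. Let $\sigma : X^+ \to T$ and $\tau : Y^+ \to S$ be choices of generators such that $X \subseteq Y$ and $\sigma$ is the restriction of $\tau$ to $X^+$. Then $L_\sigma(T) = L_\tau(S) \cap \hat{X}^*$.
   Context: For a semigroup $S$, $S^1$ denotes the monoid obtained by adjoining a new identity $1$ (even if $S$ already has one). A choice of generators for $S$ is a surjective morphism $\sigma : X^+ \to S$ from a free semigroup; it extends uniquely to $\sigma^1 : X^* \to S^1$. Let $\overline{X} = \{\overline{x} : x \in X\}$ be a set of formal inverses, $\hat{X} = X \cup \overline{X}$ (and $\hat Y$ similarly, so $\hat X \subseteq \hat Y$). The loop automaton of $S$ with respect to $\sigma$ is the directed labelled graph with vertex set $S^1$, having for each $a \in S^1$ and $x \in X$ an edge from $a$ to $a(x\sigma)$ labelled $x$ and an edge from $a(x\sigma)$ to $a$ labelled $\overline{x}$. The loop problem $L_\sigma(S) \subseteq \hat{X}^*$ is the set of words labelling paths from $1$ to $1$ in this graph (including the empty word). A subsemigroup $T$ of $S$ is weakly pseudo-right-unitary if for every $a \in S$ and every pair $x, y \in T$ with $ax \in T$, there exists $b \in T$ with $ax = bx$ and $ay = by$. *)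

theory Defs
  imports Main
begin

text \<open>The ambient semigroup S is the whole type 'a (class semigroup_mult).
  S^1 is modelled as 'a option, with None the adjoined identity.\<close>

definition mult1 :: "'a::semigroup_mult option \<Rightarrow> 'a \<Rightarrow> 'a option" where
  "mult1 a s = Some (case a of None \<Rightarrow> s | Some b \<Rightarrow> b * s)"

fun word_val :: "('x \<Rightarrow> 'a::semigroup_mult) \<Rightarrow> 'x list \<Rightarrow> 'a" where
  "word_val g [] = undefined"
| "word_val g [x] = g x"
| "word_val g (x # y # ys) = g x * word_val g (y # ys)"

definition subsemigroup :: "'a::semigroup_mult set \<Rightarrow> bool" where
  "subsemigroup T \<longleftrightarrow> (\<forall>x\<in>T. \<forall>y\<in>T. x * y \<in> T)"

definition gen_choice :: "'a::semigroup_mult set \<Rightarrow> 'x set \<Rightarrow> ('x \<Rightarrow> 'a) \<Rightarrow> bool" where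
  "gen_choice V X g \<longleftrightarrow> V = {word_val g w | w. w \<noteq> [] \<and> set w \<subseteq> X}"

definition fin_generated :: "'a::semigroup_mult set \<Rightarrow> bool" where
  "fin_generated T \<longleftrightarrow> (\<exists>F. finite F \<and> gen_choice T F id)"

definition weakly_pseudo_right_unitary :: "'a::semigroup_mult set \<Rightarrow> bool" where
  "weakly_pseudo_right_unitary T \<longleftrightarrow>
     (\<forall>a x y. x \<in> T \<longrightarrow> y \<in> T \<longrightarrow> a * x \<in> T \<longrightarrow>
        (\<exists>b\<in>T. a * x = b * x \<and> a * y = b * y))"

datatype 'x hat = Pos 'x | Neg 'x

definition hat :: "'x set \<Rightarrow> 'x hat set" where
  "hat X = Pos ` X \<union> Neg ` X"

text \<open>Paths in the loop automaton with vertex set V^1 = {None} \<union> Some ` V: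
  reach V g w a b holds iff w labels a path from a to b.\<close>
fun reach :: "'a::semigroup_mult set \<Rightarrow> ('x \<Rightarrow> 'a) \<Rightarrow> 'x hat list \<Rightarrow> 'a option \<Rightarrow> 'a option \<Rightarrow> bool" where
  "reach V g [] a b \<longleftrightarrow> a = b"
| "reach V g (Pos x # w) a b \<longleftrightarrow> reach V g w (mult1 a (g x)) b"
| "reach V g (Neg x # w) a b \<longleftrightarrow>
     (\<exists>c. (c = None \<or> (\<exists>v\<in>V. c = Some v)) \<and> mult1 c (g x) = a \<and> reach V g w c b)"

definition loop_problem :: "'a::semigroup_mult set \<Rightarrow> 'x set \<Rightarrow> ('x \<Rightarrow> 'a) \<Rightarrow> 'x hat list set" where
  "loop_problem V X g = {w. set w \<subseteq> hat X \<and> reach V g w None None}"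

end

theory Submission
  imports Defs
begin

definition good :: "'a set \<Rightarrow> 'a option \<Rightarrow> bool" where
  "good V c \<longleftrightarrow> c = None \<or> (\<exists>v\<in>V. c = Some v)"

definition multw :: "('x \<Rightarrow> 'a::semigroup_mult) \<Rightarrow> 'a option \<Rightarrow> 'x list \<Rightarrow> 'a option" where
  "multw g c ys = foldl (\<lambda>a x. mult1 a (g x)) c ys"

lemma mult1_assoc: "mult1 (mult1 c s) t = mult1 c (s * t)"
  by (cases c) (simp_all add: mult1_def mult.assoc)

lemma reach_Pos_run:
  "reach V g (map Pos xs @ rest) a e = reach V g rest (multw g a xs) e"
  by (induct xs arbitrary: a) (simp_all add: multw_def)

lemma reach_Neg_run_UNIV:
  "reach UNIV g (map Neg xs @ rest) a e \<Longrightarrow> \<exists>c. multw g c (rev xs) = a \<and> reach UNIV g rest c e"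
proof (induct xs arbitrary: a)
  case Nil then show ?case by (simp add: multw_def)
next
  case (Cons x xs)
  then obtain c' where c': "mult1 c' (g x) = a" "reach UNIV g (map Neg xs @ rest) c' e" by auto
  from Cons(1)[OF c'(2)] obtain c where "multw g c (rev xs) = c'" "reach UNIV g rest c e" by auto
  then show ?case using c'(1) by (auto simp: multw_def)
qed

lemma good_multw:
  assumes "subsemigroup T" "\<forall>x\<in>X. g x \<in> T"
  shows "good T c \<Longrightarrow> set ys \<subseteq> X \<Longrightarrow> good T (multw g c ys)"
proof (induct ys arbitrary: c)
  case Nil then show ?case by (simp add: multw_def)
next
  case (Cons y ys)
  have "good T (mult1 c (g y))"
    using Cons(2,3) assms unfolding good_def subsemigroup_def mult1_def by auto
  then show ?case using Cons(1)[of "mult1 c (g y)"] Cons(3) by (simp add: multw_def)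
qed

lemma reach_Neg_run_T:
  assumes "subsemigroup T" "\<forall>x\<in>X. g x \<in> T"
  shows "good T c \<Longrightarrow> set xs \<subseteq> X \<Longrightarrow> reach T g rest c e \<Longrightarrow>
     reach T g (map Neg xs @ rest) (multw g c (rev xs)) e"
proof (induct xs arbitrary: c)
  case Nil then show ?case by (simp add: multw_def)
next
  case (Cons x xs)
  have g: "good T (multw g c (rev xs))" using good_multw[OF assms] Cons by auto
  have "reach T g (map Neg xs @ rest) (multw g c (rev xs)) e" using Cons by auto
  then show ?case using g unfolding good_def by (auto simp: multw_def)
qed

lemma multw_prod:
  assumes "subsemigroup T" "\<forall>x\<in>X. g x \<in> T"
  shows "ys \<noteq> [] \<Longrightarrow> set ys \<subseteq> X \<Longrightarrow> \<exists>p\<in>T. \<forall>c. multw g c ys = mult1 c p"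
proof (induct ys)
  case Nil then show ?case by simp
next
  case (Cons y ys)
  show ?case
  proof (cases "ys = []")
    case True then show ?thesis using Cons assms by (auto simp: multw_def)
  next
    case False
    then obtain p where p: "p \<in> T" "\<forall>c. multw g c ys = mult1 c p" using Cons by auto
    have "g y * p \<in> T" using p assms Cons(3) unfolding subsemigroup_def by auto
    moreover have "\<forall>c. multw g c (y # ys) = mult1 c (g y * p)"
      using p by (auto simp: multw_def mult1_assoc)
    ultimately show ?thesis by blast
  qed
qed

lemma split_neg:
  "\<exists>xs rest. Neg x # w = map Neg xs @ rest \<and> xs \<noteq> [] \<and> (rest = [] \<or> (\<exists>z r. rest = Pos z # r))"
proof (induct w arbitrary: x)
  case Nil then show ?case by (rule exI[of _ "[x]"]) simp
next
  case (Cons h w)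
  show ?case
  proof (cases h)
    case (Pos z) then show ?thesis by (intro exI[of _ "[x]"]) auto
  next
    case (Neg y)
    then obtain xs rest where "Neg y # w = map Neg xs @ rest" "xs \<noteq> []"
      "(rest = [] \<or> (\<exists>z r. rest = Pos z # r))" using Cons[of y] by blast
    then show ?thesis using Neg by (intro exI[of _ "x # xs"] exI[of _ rest]) auto
  qed
qed

lemma reach_mono_UNIV: "reach T g w a b \<Longrightarrow> reach UNIV g w a b"
proof (induct w arbitrary: a)
  case Nil then show ?case by simp
next
  case (Cons h w) then show ?case by (cases h) auto
qed

lemma main_incl:
  assumes sub: "subsemigroup T" and gT: "\<forall>x\<in>X. g x \<in> T"
    and wpru: "weakly_pseudo_right_unitary T"
  shows "set w \<subseteq> hat X \<Longrightarrow> good T a \<Longrightarrow> good T e \<Longrightarrow> reach UNIV g w a e \<Longrightarrow> reach T g w a e"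
proof (induct "length w" arbitrary: w a rule: less_induct)
  case less
  show ?case
  proof (cases w)
    case Nil then show ?thesis using less by simp
  next
    case (Cons h w')
    show ?thesis
    proof (cases h)
      case (Pos x)
      have x: "x \<in> X" using less(2) Cons Pos by (auto simp: hat_def)
      have "good T (mult1 a (g x))" using less(3) x gT sub
        unfolding good_def mult1_def subsemigroup_def by auto
      then show ?thesis using less Cons Pos by auto
    next
      case (Neg x)
      obtain xs rest where sp: "w = map Neg xs @ rest" "xs \<noteq> []"
        "(rest = [] \<or> (\<exists>z r. rest = Pos z # r))" using split_neg[of x w'] Cons Neg by metis
      have xsX: "set xs \<subseteq> X" using less(2) sp(1) by (auto simp: hat_def)
      have restX: "set rest \<subseteq> hat X" using less(2) sp(1) by auto
      obtain c where c: "multw g c (rev xs) = a" "reach UNIV g rest c e"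
        using reach_Neg_run_UNIV less(5) sp(1) by metis
      have lenr: "length rest < length w" using sp by simp
      show ?thesis
      proof (cases "good T c")
        case True
        have "reach T g rest c e" using less(1)[OF lenr restX True less(4) c(2)] .
        then show ?thesis using reach_Neg_run_T[OF sub gT True xsX] c(1) sp(1) by simp
      next
        case False
        then obtain s where s: "c = Some s" "s \<notin> T" unfolding good_def by (cases c) auto
        obtain p where p: "p \<in> T" "\<forall>c. multw g c (rev xs) = mult1 c p"
          using multw_prod[OF sub gT, of "rev xs"] sp(2) xsX by auto
        have ap: "a = Some (s * p)" using c(1) p s by (simp add: mult1_def)
        have spT: "s * p \<in> T" using less(3) ap unfolding good_def by auto
        show ?thesis
        proof (cases "rest = []")
          case True
          then have "c = e" using c(2) by simp
          then show ?thesis using False less(4) by simp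
        next
          case False
          then obtain z r where zr: "rest = Pos z # r" using sp(3) by auto
          have z: "z \<in> X" using restX zr by (auto simp: hat_def)
          have gz: "g z \<in> T" using gT z by auto
          obtain b where b: "b \<in> T" "s * p = b * p" "s * g z = b * g z"
            using wpru p(1) gz spT unfolding weakly_pseudo_right_unitary_def by blast
          have rr: "reach UNIV g r (Some (b * g z)) e"
            using c(2) zr s b(3) by (simp add: mult1_def)
          have gbz: "good T (Some (b * g z))" using b(1) gz sub
            unfolding good_def subsemigroup_def by auto
          have lr: "length r < length w" using lenr zr by simp
          have rX: "set r \<subseteq> hat X" using restX zr by auto
          have "reach T g r (Some (b * g z)) e" using less(1)[OF lr rX gbz less(4) rr] .
          then have "reach T g rest (Some b) e" using zr by (simp add: mult1_def)
          moreover have "good T (Some b)" using b(1) unfolding good_def by auto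
          ultimately have "reach T g (map Neg xs @ rest) (multw g (Some b) (rev xs)) e"
            using reach_Neg_run_T[OF sub gT _ xsX] by blast
          moreover have "multw g (Some b) (rev xs) = a"
            using p(2) ap b(2) by (simp add: mult1_def)
          ultimately show ?thesis using sp(1) by simp
        qed
      qed
    qed
  qed
qed

theorem proposition3p2:
  fixes T :: "'a::semigroup_mult set" and X Y :: "'x set" and \<tau> :: "'x \<Rightarrow> 'a"
  assumes "subsemigroup T"
    and "fin_generated T"
    and "weakly_pseudo_right_unitary T"
    and "X \<subseteq> Y"
    and "gen_choice T X \<tau>"
    and "gen_choice (UNIV :: 'a set) Y \<tau>"
  shows "loop_problem T X \<tau> = loop_problem (UNIV :: 'a set) Y \<tau> \<inter> lists (hat X)"
proof -
  have gT: "\<forall>x\<in>X. \<tau> x \<in> T"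
  proof
    fix x assume "x \<in> X"
    then have "word_val \<tau> [x] \<in> {word_val \<tau> w | w. w \<noteq> [] \<and> set w \<subseteq> X}"
      by (intro CollectI exI[of _ "[x]"]) simp
    then show "\<tau> x \<in> T" using assms(5) unfolding gen_choice_def by simp
  qed
  have hXY: "hat X \<subseteq> hat Y" using assms(4) unfolding hat_def by auto
  have gN: "good T None" by (simp add: good_def)
  show ?thesis
  proof
    show "loop_problem T X \<tau> \<subseteq> loop_problem UNIV Y \<tau> \<inter> lists (hat X)"
      using hXY reach_mono_UNIV unfolding loop_problem_def by blast
  next
    show "loop_problem UNIV Y \<tau> \<inter> lists (hat X) \<subseteq> loop_problem T X \<tau>"
      using main_incl[OF assms(1) gT assms(3) _ gN gN] unfolding loop_problem_def
      by (auto simp: lists_eq_set)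
  qed
qed

end
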